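(* Let $n,m\in\mathbb{N}$. Let $X_1,\ldots,X_n,Y_1,\ldots,Y_m$ be real-valued random variables that are GTAI. Let $\Theta_1,\ldots,\Theta_n,\Delta_1,\ldots,\Delta_m$ be non-negative random variables, none degenerate at zero, arbitrarily dependent among themselves, each with distribution whose support is bounded from above (i.e. there are constants $b_i,d_j\in(0,\infty)$ with $\mathbb{P}(\Theta_i\le b_i)=\mathbb{P}(\Delta_j\le d_j)=1$), and such that the vector $(\Theta_1,\ldots,\Theta_n,\Delta_1,\ldots,\Delta_m)$ is independent of $(X_1,\ldots,X_n,Y_1,\ldots,Y_m)$. Then the products $\Theta_1X_1,\ldots,\Theta_nX_n,\Delta_1Y_1,\ldots,\Delta_mY_m$ are GTAI.
   Context: GTAI (generalized tail asymptotic independence): real-valued random variables $X_1,\ldots,X_n,Y_1,\ldots,Y_m$, whose distributions have supports unbounded from above, are called GTAI if (i) $\lim_{x_i\wedge x_k\wedge y_j\to\infty}\mathbb{P}(|X_i|>x_i\mid X_k>x_k,\,Y_j>y_j)=0$ for all $1\le i\neq k\le n$ and $j=1,\ldots,m$, and (ii) $\lim_{x_i\wedge y_j\wedge y_k\to\infty}\mathbb{P}(|Y_j|>y_j\mid X_i>x_i,\,Y_k>y_k)=0$ for all $1\le j\neq k\le m$ and $i=1,\ldots,n$. Here $a\wedge b=\min\{a,b\}$. *)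

theory Defs
  imports "HOL-Probability.Probability"
begin

text \<open>Elementary conditional probability P(A | B) = P(A \<inter> B) / P(B)
  (with the HOL convention x / 0 = 0).\<close>
definition condP :: "'a measure \<Rightarrow> ('a \<Rightarrow> bool) \<Rightarrow> ('a \<Rightarrow> bool) \<Rightarrow> real" where
  "condP M A B = measure M {\<omega> \<in> space M. A \<omega> \<and> B \<omega>} / measure M {\<omega> \<in> space M. B \<omega>}"

definition unbounded_above :: "'a measure \<Rightarrow> ('a \<Rightarrow> real) \<Rightarrow> bool" where
  "unbounded_above M Z \<longleftrightarrow> (\<forall>x. measure M {\<omega> \<in> space M. Z \<omega> > x} > 0)"

text \<open>The limit as min(x_i, x_k, y_j) \<rightarrow> \<infinity> is the limit along the product filter
  at_top \<times> at_top \<times> at_top.\<close>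
definition GTAI :: "'a measure \<Rightarrow> nat \<Rightarrow> nat \<Rightarrow> (nat \<Rightarrow> 'a \<Rightarrow> real) \<Rightarrow> (nat \<Rightarrow> 'a \<Rightarrow> real) \<Rightarrow> bool" where
  "GTAI M n m X Y \<longleftrightarrow>
     (\<forall>i<n. unbounded_above M (X i)) \<and> (\<forall>j<m. unbounded_above M (Y j)) \<and>
     (\<forall>i<n. \<forall>k<n. \<forall>j<m. i \<noteq> k \<longrightarrow>
        ((\<lambda>(xi, xk, yj). condP M (\<lambda>\<omega>. \<bar>X i \<omega>\<bar> > xi) (\<lambda>\<omega>. X k \<omega> > xk \<and> Y j \<omega> > yj))
          \<longlongrightarrow> 0) (at_top \<times>\<^sub>F at_top \<times>\<^sub>F at_top)) \<and>
     (\<forall>j<m. \<forall>k<m. \<forall>i<n. j \<noteq> k \<longrightarrow>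
        ((\<lambda>(xi, yj, yk). condP M (\<lambda>\<omega>. \<bar>Y j \<omega>\<bar> > yj) (\<lambda>\<omega>. X i \<omega> > xi \<and> Y k \<omega> > yk))
          \<longlongrightarrow> 0) (at_top \<times>\<^sub>F at_top \<times>\<^sub>F at_top))"

end

theory Submission
  imports Defs
begin

lemma ev3_get:
  assumes "eventually P (at_top \<times>\<^sub>F at_top \<times>\<^sub>F (at_top :: real filter))"
  shows "\<exists>T. \<forall>a b c. a \<ge> T \<longrightarrow> b \<ge> T \<longrightarrow> c \<ge> T \<longrightarrow> P (a, b, c)"
proof -
  obtain Pf Pg where 1: "eventually Pf at_top" "eventually Pg (at_top \<times>\<^sub>F (at_top :: real filter))"
    "\<forall>x y. Pf x \<longrightarrow> Pg y \<longrightarrow> P (x, y)" using assms unfolding eventually_prod_filter by blast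
  obtain Qf Qg where 2: "eventually Qf at_top" "eventually Qg (at_top :: real filter)"
    "\<forall>x y. Qf x \<longrightarrow> Qg y \<longrightarrow> Pg (x, y)" using 1(2) unfolding eventually_prod_filter by blast
  obtain N1 where N1: "\<forall>x\<ge>N1. Pf x" using 1(1) eventually_at_top_linorder by blast
  obtain N2 where N2: "\<forall>x\<ge>N2. Qf x" using 2(1) eventually_at_top_linorder by blast
  obtain N3 where N3: "\<forall>x\<ge>N3. Qg x" using 2(2) eventually_at_top_linorder by blast
  show ?thesis
    apply (rule exI[of _ "max N1 (max N2 N3)"])
    using N1 N2 N3 1(3) 2(3) by auto
qed

lemma ev3_put:
  fixes Ta Tb Tc :: real
  assumes "\<forall>a b c. a \<ge> Ta \<longrightarrow> b \<ge> Tb \<longrightarrow> c \<ge> Tc \<longrightarrow> P (a, b, c)"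
  shows "eventually P (at_top \<times>\<^sub>F at_top \<times>\<^sub>F (at_top :: real filter))"
proof -
  have e: "eventually (\<lambda>(b,c). b \<ge> Tb \<and> c \<ge> Tc) (at_top \<times>\<^sub>F (at_top :: real filter))"
    unfolding eventually_prod_filter
    by (rule exI[of _ "\<lambda>b. b \<ge> Tb"], rule exI[of _ "\<lambda>c. c \<ge> Tc"]) (use eventually_ge_at_top[of Tb] eventually_ge_at_top[of Tc] in auto)
  show ?thesis
    apply (rule eventually_prod_filter[THEN iffD2])
    apply (rule exI[of _ "\<lambda>a. a \<ge> Ta"])
    apply (rule exI[of _ "\<lambda>(b,c). b \<ge> Tb \<and> c \<ge> Tc"])
    using assms e eventually_ge_at_top[of Ta] by auto
qed

lemma swap_filterlim:
  "filterlim (\<lambda>(x, y, z). (y, x, z)) ((at_top :: real filter) \<times>\<^sub>F (at_top :: real filter) \<times>\<^sub>F (at_top :: real filter)) ((at_top :: real filter) \<times>\<^sub>F (at_top :: real filter) \<times>\<^sub>F (at_top :: real filter))"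
  unfolding filterlim_def le_filter_def eventually_filtermap
proof (intro allI impI)
  fix P assume "eventually P ((at_top :: real filter) \<times>\<^sub>F (at_top :: real filter) \<times>\<^sub>F (at_top :: real filter))"
  from ev3_get[OF this] obtain T where "\<forall>a b c. a \<ge> T \<longrightarrow> b \<ge> T \<longrightarrow> c \<ge> T \<longrightarrow> P (a, b, c)" by blast
  then show "eventually (\<lambda>x. P (case x of (x, y, z) \<Rightarrow> (y, x, z))) ((at_top :: real filter) \<times>\<^sub>F (at_top :: real filter) \<times>\<^sub>F (at_top :: real filter))"
    by (intro ev3_put[of T T T]) auto
qed

lemma swap_lim:
  assumes "(h \<longlongrightarrow> l) ((at_top :: real filter) \<times>\<^sub>F (at_top :: real filter) \<times>\<^sub>F (at_top :: real filter))"
  shows "((\<lambda>(b, a, c). h (a, b, c)) \<longlongrightarrow> l) ((at_top :: real filter) \<times>\<^sub>F (at_top :: real filter) \<times>\<^sub>F (at_top :: real filter))"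
proof -
  have "((h \<circ> (\<lambda>(x, y, z). (y, x, z))) \<longlongrightarrow> l) ((at_top :: real filter) \<times>\<^sub>F (at_top :: real filter) \<times>\<^sub>F (at_top :: real filter))"
    unfolding comp_def by (rule filterlim_compose[OF assms swap_filterlim])
  moreover have "h \<circ> (\<lambda>(x, y, z). (y, x, z)) = (\<lambda>(b, a, c). h (a, b, c))" by (auto simp: fun_eq_iff)
  ultimately show ?thesis by simp
qed

lemma indep_fubini:
  assumes P: "prob_space M" and ind: "prob_space.indep_var M N1 U N2 V"
    and S: "S \<in> sets (N1 \<Otimes>\<^sub>M N2)"
  shows "emeasure M {\<omega>\<in>space M. (U \<omega>, V \<omega>) \<in> S}
     = (\<integral>\<^sup>+u. emeasure (distr M N2 V) (Pair u -` S) \<partial>distr M N1 U)"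
    and "(\<lambda>u. emeasure (distr M N2 V) (Pair u -` S)) \<in> borel_measurable N1"
    and "U \<in> measurable M N1" and "V \<in> measurable M N2"
    and "\<And>u B. B \<in> sets N2 \<Longrightarrow> emeasure (distr M N2 V) B = emeasure M {\<omega>\<in>space M. V \<omega> \<in> B}"
proof -
  interpret prob_space M by fact
  have rv: "random_variable N1 U" "random_variable N2 V"
    and eq: "distr M N1 U \<Otimes>\<^sub>M distr M N2 V = distr M (N1 \<Otimes>\<^sub>M N2) (\<lambda>x. (U x, V x))"
    using ind unfolding indep_var_distribution_eq by auto
  show "U \<in> measurable M N1" "V \<in> measurable M N2" using rv by auto
  interpret PV: prob_space "distr M N2 V" by (rule prob_space_distr[OF rv(2)])
  have "emeasure M {\<omega>\<in>space M. (U \<omega>, V \<omega>) \<in> S} = emeasure (distr M (N1 \<Otimes>\<^sub>M N2) (\<lambda>x. (U x, V x))) S"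
    using S rv by (subst emeasure_distr) (auto intro!: arg_cong[where f="emeasure M"])
  also have "\<dots> = emeasure (distr M N1 U \<Otimes>\<^sub>M distr M N2 V) S" by (simp add: eq)
  also have "\<dots> = (\<integral>\<^sup>+u. emeasure (distr M N2 V) (Pair u -` S) \<partial>distr M N1 U)"
    using S by (intro PV.emeasure_pair_measure_alt) simp
  finally show "emeasure M {\<omega>\<in>space M. (U \<omega>, V \<omega>) \<in> S}
     = (\<integral>\<^sup>+u. emeasure (distr M N2 V) (Pair u -` S) \<partial>distr M N1 U)" .
  show "(\<lambda>u. emeasure (distr M N2 V) (Pair u -` S)) \<in> borel_measurable N1"
    using PV.measurable_emeasure_Pair[of S N1] S by simp
  show "\<And>u B. B \<in> sets N2 \<Longrightarrow> emeasure (distr M N2 V) B = emeasure M {\<omega>\<in>space M. V \<omega> \<in> B}"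
    using rv by (subst emeasure_distr) (auto intro!: arg_cong[where f="emeasure M"])
qed

lemma condP_le:
  assumes "prob_space M" and "measure M {\<omega>\<in>space M. A \<omega> \<and> B \<omega>} \<le> d * measure M {\<omega>\<in>space M. B \<omega>}"
    and "d \<ge> 0"
  shows "condP M A B \<le> d" "condP M A B \<ge> 0"
proof -
  show "condP M A B \<ge> 0" unfolding condP_def by simp
  show "condP M A B \<le> d"
  proof (cases "measure M {\<omega>\<in>space M. B \<omega>} = 0")
    case True then show ?thesis using assms unfolding condP_def by simp
  next
    case False
    then have "measure M {\<omega>\<in>space M. B \<omega>} > 0" using measure_nonneg[of M] by (simp add: order_less_le)
    then show ?thesis using assms unfolding condP_def by (simp add: divide_le_eq)
  qed
qed

lemma condP_lt_imp:
  assumes "prob_space M" and "condP M A B < d"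
    and "{\<omega>\<in>space M. B \<omega>} \<in> sets M"
  shows "measure M {\<omega>\<in>space M. A \<omega> \<and> B \<omega>} \<le> d * measure M {\<omega>\<in>space M. B \<omega>}"
proof -
  interpret prob_space M by fact
  have sub: "measure M {\<omega>\<in>space M. A \<omega> \<and> B \<omega>} \<le> measure M {\<omega>\<in>space M. B \<omega>}"
    by (rule finite_measure_mono_AE) (use assms(3) in auto)
  show ?thesis
  proof (cases "measure M {\<omega>\<in>space M. B \<omega>} = 0")
    case True then show ?thesis using sub by (simp add: measure_nonneg antisym)
  next
    case False
    then have "measure M {\<omega>\<in>space M. B \<omega>} > 0" using measure_nonneg[of M] by (simp add: order_less_le)
    then show ?thesis using assms unfolding condP_def by (simp add: divide_less_eq)
  qed
qed

lemma key:
  fixes M :: "'a measure" and U :: "'a \<Rightarrow> 'u" and V :: "'a \<Rightarrow> 'u"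
    and f1 f2 f3 :: "'u \<Rightarrow> real" and g1 g2 g3 :: "'u \<Rightarrow> real" and B1 B2 B3 :: real
  assumes P: "prob_space M" and ind: "prob_space.indep_var M N1 U N2 V"
    and [measurable]: "f1 \<in> borel_measurable N1" "f2 \<in> borel_measurable N1" "f3 \<in> borel_measurable N1"
    and [measurable]: "g1 \<in> borel_measurable N2" "g2 \<in> borel_measurable N2" "g3 \<in> borel_measurable N2"
    and B: "B1 > 0" "B2 > 0" "B3 > 0"
    and AEf: "AE \<omega> in M. 0 \<le> f1 (U \<omega>) \<and> f1 (U \<omega>) \<le> B1 \<and> 0 \<le> f2 (U \<omega>) \<and> f2 (U \<omega>) \<le> B2
                 \<and> 0 \<le> f3 (U \<omega>) \<and> f3 (U \<omega>) \<le> B3"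
    and lim: "((\<lambda>(a, b, c). condP M (\<lambda>\<omega>. \<bar>g1 (V \<omega>)\<bar> > a) (\<lambda>\<omega>. g2 (V \<omega>) > b \<and> g3 (V \<omega>) > c))
          \<longlongrightarrow> 0) (at_top \<times>\<^sub>F at_top \<times>\<^sub>F at_top)"
  shows "((\<lambda>(a, b, c). condP M (\<lambda>\<omega>. \<bar>f1 (U \<omega>) * g1 (V \<omega>)\<bar> > a)
            (\<lambda>\<omega>. f2 (U \<omega>) * g2 (V \<omega>) > b \<and> f3 (U \<omega>) * g3 (V \<omega>) > c))
          \<longlongrightarrow> 0) (at_top \<times>\<^sub>F at_top \<times>\<^sub>F at_top)"
proof -
  interpret prob_space M by fact
  have rv: "U \<in> measurable M N1" "V \<in> measurable M N2"
    using ind unfolding indep_var_distribution_eq by auto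
  note [measurable] = rv
  interpret PV: prob_space "distr M N2 V" by (rule prob_space_distr[OF rv(2)])
  show ?thesis unfolding tendsto_iff
  proof (intro allI impI)
    fix e :: real assume e: "e > 0"
    define \<delta> where "\<delta> = e / 2"
    have d: "\<delta> > 0" "\<delta> < e" using e by (auto simp: \<delta>_def)
    obtain T where T: "\<forall>a b c. a \<ge> T \<longrightarrow> b \<ge> T \<longrightarrow> c \<ge> T \<longrightarrow>
         condP M (\<lambda>\<omega>. \<bar>g1 (V \<omega>)\<bar> > a) (\<lambda>\<omega>. g2 (V \<omega>) > b \<and> g3 (V \<omega>) > c) < \<delta>"
    proof -
      have "eventually (\<lambda>x. dist ((\<lambda>(a, b, c). condP M (\<lambda>\<omega>. \<bar>g1 (V \<omega>)\<bar> > a) (\<lambda>\<omega>. g2 (V \<omega>) > b \<and> g3 (V \<omega>) > c)) x) 0 < \<delta>)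
          (at_top \<times>\<^sub>F at_top \<times>\<^sub>F at_top)"
        using lim d(1) unfolding tendsto_iff by blast
      from ev3_get[OF this] obtain T where "\<forall>a b c. a \<ge> T \<longrightarrow> b \<ge> T \<longrightarrow> c \<ge> T \<longrightarrow>
         dist (condP M (\<lambda>\<omega>. \<bar>g1 (V \<omega>)\<bar> > a) (\<lambda>\<omega>. g2 (V \<omega>) > b \<and> g3 (V \<omega>) > c)) 0 < \<delta>" by auto
      then show ?thesis by (intro that) (auto simp: dist_real_def abs_less_iff)
    qed
    have GF: "measure M {\<omega>\<in>space M. \<bar>g1 (V \<omega>)\<bar> > a \<and> (g2 (V \<omega>) > b \<and> g3 (V \<omega>) > c)}
        \<le> \<delta> * measure M {\<omega>\<in>space M. g2 (V \<omega>) > b \<and> g3 (V \<omega>) > c}"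
      if "a \<ge> T" "b \<ge> T" "c \<ge> T" for a b c
      using T that by (intro condP_lt_imp[OF P]) auto
    define T' where "T' = max T 1"
    show "eventually (\<lambda>x. dist ((\<lambda>(a, b, c). condP M (\<lambda>\<omega>. \<bar>f1 (U \<omega>) * g1 (V \<omega>)\<bar> > a)
            (\<lambda>\<omega>. f2 (U \<omega>) * g2 (V \<omega>) > b \<and> f3 (U \<omega>) * g3 (V \<omega>) > c)) x) 0 < e)
          (at_top \<times>\<^sub>F at_top \<times>\<^sub>F at_top)"
    proof (rule ev3_put[of "B1 * T'" "B2 * T'" "B3 * T'"], intro allI impI)
      fix a b c assume abc: "B1 * T' \<le> a" "B2 * T' \<le> b" "B3 * T' \<le> c"
      have T'1: "T' \<ge> 1" "T' \<ge> T" by (auto simp: T'_def)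
      have pos: "a > 0" "b > 0" "c > 0" using abc T'1 B
        by (metis less_le_trans mult_pos_pos zero_less_one less_le_trans)+
      define Sn where "Sn = {p \<in> space (N1 \<Otimes>\<^sub>M N2). \<bar>f1 (fst p) * g1 (snd p)\<bar> > a \<and>
         (f2 (fst p) * g2 (snd p) > b \<and> f3 (fst p) * g3 (snd p) > c)}"
      define Sd where "Sd = {p \<in> space (N1 \<Otimes>\<^sub>M N2). f2 (fst p) * g2 (snd p) > b \<and> f3 (fst p) * g3 (snd p) > c}"
      have Sn: "Sn \<in> sets (N1 \<Otimes>\<^sub>M N2)" unfolding Sn_def by measurable
      have Sd: "Sd \<in> sets (N1 \<Otimes>\<^sub>M N2)" unfolding Sd_def by measurable
      have en: "{\<omega>\<in>space M. \<bar>f1 (U \<omega>) * g1 (V \<omega>)\<bar> > a \<and>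
           (f2 (U \<omega>) * g2 (V \<omega>) > b \<and> f3 (U \<omega>) * g3 (V \<omega>) > c)}
         = {\<omega>\<in>space M. (U \<omega>, V \<omega>) \<in> Sn}"
        unfolding Sn_def using measurable_space[OF rv(1)] measurable_space[OF rv(2)] by (auto simp: space_pair_measure)
      have ed: "{\<omega>\<in>space M. f2 (U \<omega>) * g2 (V \<omega>) > b \<and> f3 (U \<omega>) * g3 (V \<omega>) > c}
         = {\<omega>\<in>space M. (U \<omega>, V \<omega>) \<in> Sd}"
        unfolding Sd_def using measurable_space[OF rv(1)] measurable_space[OF rv(2)] by (auto simp: space_pair_measure)
      have AEu: "AE u in distr M N1 U. emeasure (distr M N2 V) (Pair u -` Sn)
                   \<le> ennreal \<delta> * emeasure (distr M N2 V) (Pair u -` Sd)"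
      proof -
        have "AE u in distr M N1 U. 0 \<le> f1 u \<and> f1 u \<le> B1 \<and> 0 \<le> f2 u \<and> f2 u \<le> B2
                 \<and> 0 \<le> f3 u \<and> f3 u \<le> B3"
        proof -
          have "{u \<in> space N1. 0 \<le> f1 u \<and> f1 u \<le> B1 \<and> 0 \<le> f2 u \<and> f2 u \<le> B2
                 \<and> 0 \<le> f3 u \<and> f3 u \<le> B3} \<in> sets N1" by measurable
          from AE_distr_iff[OF rv(1) this] AEf show ?thesis by blast
        qed
        then show ?thesis
        proof (rule AE_mp, intro AE_I2 impI)
          fix u assume u: "u \<in> space (distr M N1 U)"
            and bd: "0 \<le> f1 u \<and> f1 u \<le> B1 \<and> 0 \<le> f2 u \<and> f2 u \<le> B2 \<and> 0 \<le> f3 u \<and> f3 u \<le> B3"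
          have uN: "u \<in> space N1" using u by simp
          show "emeasure (distr M N2 V) (Pair u -` Sn) \<le> ennreal \<delta> * emeasure (distr M N2 V) (Pair u -` Sd)"
          proof (cases "f2 u = 0 \<or> f3 u = 0")
            case True
            then have "Pair u -` Sn = {}" unfolding Sn_def using pos by auto
            then show ?thesis by simp
          next
            case False
            then have f2p: "f2 u > 0" and f3p: "f3 u > 0" using bd by auto
            define Gs where "Gs = {v\<in>space N2. \<bar>g1 v\<bar> > a / B1 \<and> (g2 v > b / f2 u \<and> g3 v > c / f3 u)}"
            define Ds where "Ds = {v\<in>space N2. g2 v > b / f2 u \<and> g3 v > c / f3 u}"
            have Gs: "Gs \<in> sets N2" unfolding Gs_def by measurable
            have Ds: "Ds \<in> sets N2" unfolding Ds_def by measurable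
            have sub: "Pair u -` Sn \<subseteq> Gs"
            proof
              fix v assume "v \<in> Pair u -` Sn"
              then have v: "v \<in> space N2" "\<bar>f1 u * g1 v\<bar> > a" "f2 u * g2 v > b" "f3 u * g3 v > c"
                unfolding Sn_def by (auto simp: space_pair_measure)
              have "\<bar>f1 u * g1 v\<bar> \<le> B1 * \<bar>g1 v\<bar>" using bd by (simp add: abs_mult mult_right_mono)
              then have "a / B1 < \<bar>g1 v\<bar>" using v(2) B(1) by (simp add: divide_less_eq mult.commute)
              moreover have "b / f2 u < g2 v" using v(3) f2p by (simp add: divide_less_eq mult.commute)
              moreover have "c / f3 u < g3 v" using v(4) f3p by (simp add: divide_less_eq mult.commute)
              ultimately show "v \<in> Gs" unfolding Gs_def using v(1) by auto
            qed
            have eqD: "Pair u -` Sd = Ds"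
              unfolding Sd_def Ds_def using uN f2p f3p
              by (auto simp: space_pair_measure divide_less_eq mult.commute)
            have th: "a / B1 \<ge> T" "b / f2 u \<ge> T" "c / f3 u \<ge> T"
            proof -
              have "a / B1 \<ge> T'" using abc(1) B(1) by (simp add: le_divide_eq mult.commute)
              then show "a / B1 \<ge> T" using T'1 by linarith
              have "b / f2 u \<ge> b / B2" using pos(2) f2p bd by (intro divide_left_mono) auto
              moreover have "b / B2 \<ge> T'" using abc(2) B(2) by (simp add: le_divide_eq mult.commute)
              ultimately show "b / f2 u \<ge> T" using T'1 by linarith
              have "c / f3 u \<ge> c / B3" using pos(3) f3p bd by (intro divide_left_mono) auto
              moreover have "c / B3 \<ge> T'" using abc(3) B(3) by (simp add: le_divide_eq mult.commute)
              ultimately show "c / f3 u \<ge> T" using T'1 by linarith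
            qed
            have "emeasure (distr M N2 V) (Pair u -` Sn) \<le> emeasure (distr M N2 V) Gs"
              using sub Gs by (intro emeasure_mono) auto
            also have "\<dots> = emeasure M {\<omega>\<in>space M. \<bar>g1 (V \<omega>)\<bar> > a / B1 \<and> (g2 (V \<omega>) > b / f2 u \<and> g3 (V \<omega>) > c / f3 u)}"
              using Gs rv(2) measurable_space[OF rv(2)]
              by (subst emeasure_distr) (auto simp: Gs_def intro!: arg_cong[where f="emeasure M"])
            also have "\<dots> \<le> ennreal (\<delta> * measure M {\<omega>\<in>space M. g2 (V \<omega>) > b / f2 u \<and> g3 (V \<omega>) > c / f3 u})"
              unfolding emeasure_eq_measure using GF[OF th] by (simp add: ennreal_leI)
            also have "\<dots> = ennreal \<delta> * emeasure M {\<omega>\<in>space M. g2 (V \<omega>) > b / f2 u \<and> g3 (V \<omega>) > c / f3 u}"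
              unfolding emeasure_eq_measure using d(1) by (simp add: ennreal_mult)
            also have "emeasure M {\<omega>\<in>space M. g2 (V \<omega>) > b / f2 u \<and> g3 (V \<omega>) > c / f3 u} = emeasure (distr M N2 V) Ds"
              using Ds rv(2) measurable_space[OF rv(2)]
              by (subst emeasure_distr) (auto simp: Ds_def intro!: arg_cong[where f="emeasure M"])
            finally show ?thesis unfolding eqD .
          qed
        qed
      qed
      have "emeasure M {\<omega>\<in>space M. (U \<omega>, V \<omega>) \<in> Sn} \<le> ennreal \<delta> * emeasure M {\<omega>\<in>space M. (U \<omega>, V \<omega>) \<in> Sd}"
        unfolding indep_fubini(1)[OF P ind Sn] indep_fubini(1)[OF P ind Sd]
        by (subst nn_integral_cmult[symmetric]) (auto intro!: nn_integral_mono_AE AEu indep_fubini(2)[OF P ind Sd])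
      then have "measure M {\<omega>\<in>space M. \<bar>f1 (U \<omega>) * g1 (V \<omega>)\<bar> > a \<and>
           (f2 (U \<omega>) * g2 (V \<omega>) > b \<and> f3 (U \<omega>) * g3 (V \<omega>) > c)}
         \<le> \<delta> * measure M {\<omega>\<in>space M. f2 (U \<omega>) * g2 (V \<omega>) > b \<and> f3 (U \<omega>) * g3 (V \<omega>) > c}"
        unfolding en ed emeasure_eq_measure using d(1)
        by (simp add: ennreal_mult[symmetric])
      then have "condP M (\<lambda>\<omega>. \<bar>f1 (U \<omega>) * g1 (V \<omega>)\<bar> > a)
            (\<lambda>\<omega>. f2 (U \<omega>) * g2 (V \<omega>) > b \<and> f3 (U \<omega>) * g3 (V \<omega>) > c) \<le> \<delta>"
           "condP M (\<lambda>\<omega>. \<bar>f1 (U \<omega>) * g1 (V \<omega>)\<bar> > a)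
            (\<lambda>\<omega>. f2 (U \<omega>) * g2 (V \<omega>) > b \<and> f3 (U \<omega>) * g3 (V \<omega>) > c) \<ge> 0"
        using condP_le[OF P _ less_imp_le[OF d(1)]] by auto
      then show "dist ((\<lambda>(a, b, c). condP M (\<lambda>\<omega>. \<bar>f1 (U \<omega>) * g1 (V \<omega>)\<bar> > a)
            (\<lambda>\<omega>. f2 (U \<omega>) * g2 (V \<omega>) > b \<and> f3 (U \<omega>) * g3 (V \<omega>) > c)) (a, b, c)) 0 < e"
        using d by (simp add: dist_real_def)
    qed
  qed
qed

lemma unb:
  fixes M :: "'a measure" and U V :: "'a \<Rightarrow> 'u" and f g :: "'u \<Rightarrow> real"
  assumes P: "prob_space M" and ind: "prob_space.indep_var M N1 U N2 V"
    and [measurable]: "f \<in> borel_measurable N1" "g \<in> borel_measurable N2"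
    and AEf: "AE \<omega> in M. 0 \<le> f (U \<omega>)"
    and nz: "measure M {\<omega>\<in>space M. f (U \<omega>) = 0} < 1"
    and ub: "unbounded_above M (\<lambda>\<omega>. g (V \<omega>))"
  shows "unbounded_above M (\<lambda>\<omega>. f (U \<omega>) * g (V \<omega>))"
  unfolding unbounded_above_def
proof
  fix x :: real
  interpret prob_space M by fact
  have rv: "U \<in> measurable M N1" "V \<in> measurable M N2"
    using ind unfolding indep_var_distribution_eq by auto
  note [measurable] = rv
  define S where "S = {p \<in> space (N1 \<Otimes>\<^sub>M N2). f (fst p) * g (snd p) > x}"
  have S: "S \<in> sets (N1 \<Otimes>\<^sub>M N2)" unfolding S_def by measurable
  have eqS: "{\<omega>\<in>space M. f (U \<omega>) * g (V \<omega>) > x} = {\<omega>\<in>space M. (U \<omega>, V \<omega>) \<in> S}"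
    unfolding S_def using measurable_space[OF rv(1)] measurable_space[OF rv(2)] by (auto simp: space_pair_measure)
  have pos: "measure M {\<omega>\<in>space M. f (U \<omega>) > 0} > 0"
  proof -
    have "measure M {\<omega>\<in>space M. f (U \<omega>) > 0} = measure M (space M - {\<omega>\<in>space M. f (U \<omega>) = 0})"
      by (rule measure_eq_AE) (use AEf in auto)
    also have "\<dots> = 1 - measure M {\<omega>\<in>space M. f (U \<omega>) = 0}"
      by (subst finite_measure_compl) (auto simp: prob_space)
    finally show ?thesis using nz by simp
  qed
  show "measure M {\<omega>\<in>space M. f (U \<omega>) * g (V \<omega>) > x} > 0"
  proof (rule ccontr)
    assume "\<not> ?thesis"
    then have "measure M {\<omega>\<in>space M. f (U \<omega>) * g (V \<omega>) > x} = 0" using measure_nonneg[of M] by (meson not_less order_antisym)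
    then have "emeasure M {\<omega>\<in>space M. (U \<omega>, V \<omega>) \<in> S} = 0" unfolding eqS emeasure_eq_measure by simp
    then have "(\<integral>\<^sup>+u. emeasure (distr M N2 V) (Pair u -` S) \<partial>distr M N1 U) = 0"
      unfolding indep_fubini(1)[OF P ind S] .
    then have AE0: "AE u in distr M N1 U. emeasure (distr M N2 V) (Pair u -` S) = 0"
      using nn_integral_0_iff_AE[of "\<lambda>u. emeasure (distr M N2 V) (Pair u -` S)" "distr M N1 U"]
        indep_fubini(2)[OF P ind S] by simp
    have "\<exists>u\<in>space N1. f u > 0 \<and> emeasure (distr M N2 V) (Pair u -` S) = 0"
    proof (rule ccontr)
      assume "\<not> ?thesis"
      then have "AE u in distr M N1 U. \<not> f u > 0" using AE0 by (rule_tac AE_mp[OF AE0], intro AE_I2) auto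
      then have "emeasure (distr M N1 U) {u\<in>space (distr M N1 U). f u > 0} = 0"
        by (subst (asm) AE_iff_measurable[OF _ refl]) auto
      moreover have "emeasure (distr M N1 U) {u\<in>space (distr M N1 U). f u > 0} = emeasure M {\<omega>\<in>space M. f (U \<omega>) > 0}"
        using measurable_space[OF rv(1)] by (subst emeasure_distr) (auto intro!: arg_cong[where f="emeasure M"])
      ultimately show False using pos unfolding emeasure_eq_measure by simp
    qed
    then obtain u where u: "u \<in> space N1" "f u > 0" "emeasure (distr M N2 V) (Pair u -` S) = 0" by blast
    have "Pair u -` S = {v\<in>space N2. g v > x / f u}"
      unfolding S_def using u(1,2) by (auto simp: space_pair_measure divide_less_eq mult.commute)
    then have "emeasure (distr M N2 V) (Pair u -` S) = emeasure M {\<omega>\<in>space M. g (V \<omega>) > x / f u}"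
      using measurable_space[OF rv(2)] by (subst emeasure_distr) (auto intro!: arg_cong[where f="emeasure M"])
    moreover have "measure M {\<omega>\<in>space M. g (V \<omega>) > x / f u} > 0" using ub unfolding unbounded_above_def by blast
    ultimately show False using u(3) unfolding emeasure_eq_measure by simp
  qed
qed
theorem lemma2p1:
  fixes M :: "'a measure" and n m :: nat
    and X Y Theta Delta :: "nat \<Rightarrow> 'a \<Rightarrow> real"
  assumes "prob_space M"
    and "\<And>i. i < n \<Longrightarrow> X i \<in> borel_measurable M"
    and "\<And>j. j < m \<Longrightarrow> Y j \<in> borel_measurable M"
    and "\<And>i. i < n \<Longrightarrow> Theta i \<in> borel_measurable M"
    and "\<And>j. j < m \<Longrightarrow> Delta j \<in> borel_measurable M"
    and "GTAI M n m X Y"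
    and "\<And>i. i < n \<Longrightarrow> AE \<omega> in M. Theta i \<omega> \<ge> 0"
    and "\<And>j. j < m \<Longrightarrow> AE \<omega> in M. Delta j \<omega> \<ge> 0"
    and "\<And>i. i < n \<Longrightarrow> measure M {\<omega> \<in> space M. Theta i \<omega> = 0} < 1"
    and "\<And>j. j < m \<Longrightarrow> measure M {\<omega> \<in> space M. Delta j \<omega> = 0} < 1"
    and "\<And>i. i < n \<Longrightarrow> \<exists>b>0. measure M {\<omega> \<in> space M. Theta i \<omega> \<le> b} = 1"
    and "\<And>j. j < m \<Longrightarrow> \<exists>d>0. measure M {\<omega> \<in> space M. Delta j \<omega> \<le> d} = 1"
    and "prob_space.indep_var M
           (PiM {..<n} (\<lambda>_. borel) \<Otimes>\<^sub>M PiM {..<m} (\<lambda>_. borel))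
           (\<lambda>\<omega>. (\<lambda>i\<in>{..<n}. Theta i \<omega>, \<lambda>j\<in>{..<m}. Delta j \<omega>))
           (PiM {..<n} (\<lambda>_. borel) \<Otimes>\<^sub>M PiM {..<m} (\<lambda>_. borel))
           (\<lambda>\<omega>. (\<lambda>i\<in>{..<n}. X i \<omega>, \<lambda>j\<in>{..<m}. Y j \<omega>))"
  shows "GTAI M n m (\<lambda>i \<omega>. Theta i \<omega> * X i \<omega>) (\<lambda>j \<omega>. Delta j \<omega> * Y j \<omega>)"
proof -
  interpret prob_space M by fact
  define N where "N = (PiM {..<n} (\<lambda>_. borel) \<Otimes>\<^sub>M PiM {..<m} (\<lambda>_. borel) :: ((nat \<Rightarrow> real) \<times> (nat \<Rightarrow> real)) measure)"
  define U where "U = (\<lambda>\<omega>. (\<lambda>i\<in>{..<n}. Theta i \<omega>, \<lambda>j\<in>{..<m}. Delta j \<omega>))"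
  define V where "V = (\<lambda>\<omega>. (\<lambda>i\<in>{..<n}. X i \<omega>, \<lambda>j\<in>{..<m}. Y j \<omega>))"
  have ind: "indep_var N U N V" using assms(13) unfolding N_def U_def V_def .
  have mf: "(\<lambda>u. fst u i) \<in> borel_measurable N" if "i < n" for i
    unfolding N_def using that by (measurable, simp)
  have ms: "(\<lambda>u. snd u j) \<in> borel_measurable N" if "j < m" for j
    unfolding N_def using that by (measurable, simp)
  have UX: "fst (U \<omega>) i = Theta i \<omega>" "fst (V \<omega>) i = X i \<omega>" if "i < n" for i \<omega>
    using that by (auto simp: U_def V_def)
  have UY: "snd (U \<omega>) j = Delta j \<omega>" "snd (V \<omega>) j = Y j \<omega>" if "j < m" for j \<omega>
    using that by (auto simp: U_def V_def)
  have bT: "\<exists>b>0. AE \<omega> in M. 0 \<le> Theta i \<omega> \<and> Theta i \<omega> \<le> b" if i0: "i < n" for i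
  proof -
    obtain b where b: "b > 0" "prob {\<omega> \<in> space M. Theta i \<omega> \<le> b} = 1" using assms(11)[OF i0] by blast
    have "AE \<omega> in M. \<omega> \<in> {\<omega> \<in> space M. Theta i \<omega> \<le> b}" by (rule AE_prob_1[OF b(2)])
    then show ?thesis using b(1) assms(7)[OF i0] by (intro exI[of _ b]) (auto elim!: AE_mp intro!: AE_I2)
  qed
  have bD: "\<exists>b>0. AE \<omega> in M. 0 \<le> Delta j \<omega> \<and> Delta j \<omega> \<le> b" if j0: "j < m" for j
  proof -
    obtain b where b: "b > 0" "prob {\<omega> \<in> space M. Delta j \<omega> \<le> b} = 1" using assms(12)[OF j0] by blast
    have "AE \<omega> in M. \<omega> \<in> {\<omega> \<in> space M. Delta j \<omega> \<le> b}" by (rule AE_prob_1[OF b(2)])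
    then show ?thesis using b(1) assms(8)[OF j0] by (intro exI[of _ b]) (auto elim!: AE_mp intro!: AE_I2)
  qed
  note G = assms(6)[unfolded GTAI_def]
  show ?thesis unfolding GTAI_def
  proof (intro conjI allI impI)
    fix i assume i: "i < n"
    have "unbounded_above M (\<lambda>\<omega>. fst (U \<omega>) i * fst (V \<omega>) i)"
      using G i assms(7)[OF i] assms(9)[OF i]
      by (intro unb[OF assms(1) ind mf[OF i] mf[OF i]]) (simp_all add: UX)
    then show "unbounded_above M (\<lambda>\<omega>. Theta i \<omega> * X i \<omega>)" using i by (simp add: UX)
  next
    fix j assume j: "j < m"
    have "unbounded_above M (\<lambda>\<omega>. snd (U \<omega>) j * snd (V \<omega>) j)"
      using G j assms(8)[OF j] assms(10)[OF j]
      by (intro unb[OF assms(1) ind ms[OF j] ms[OF j]]) (simp_all add: UY)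
    then show "unbounded_above M (\<lambda>\<omega>. Delta j \<omega> * Y j \<omega>)" using j by (simp add: UY)
  next
    fix i k j assume ikj: "i < n" "k < n" "j < m" "i \<noteq> k"
    obtain b1 where b1: "b1 > 0" "AE \<omega> in M. 0 \<le> Theta i \<omega> \<and> Theta i \<omega> \<le> b1" using bT ikj by blast
    obtain b2 where b2: "b2 > 0" "AE \<omega> in M. 0 \<le> Theta k \<omega> \<and> Theta k \<omega> \<le> b2" using bT ikj by blast
    obtain b3 where b3: "b3 > 0" "AE \<omega> in M. 0 \<le> Delta j \<omega> \<and> Delta j \<omega> \<le> b3" using bD ikj by blast
    have "((\<lambda>(a, b, c). condP M (\<lambda>\<omega>. \<bar>fst (U \<omega>) i * fst (V \<omega>) i\<bar> > a)
            (\<lambda>\<omega>. fst (U \<omega>) k * fst (V \<omega>) k > b \<and> snd (U \<omega>) j * snd (V \<omega>) j > c))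
          \<longlongrightarrow> 0) (at_top \<times>\<^sub>F at_top \<times>\<^sub>F at_top)"
      using G ikj b1 b2 b3
      by (intro key[OF assms(1) ind mf[OF ikj(1)] mf[OF ikj(2)] ms[OF ikj(3)]
            mf[OF ikj(1)] mf[OF ikj(2)] ms[OF ikj(3)] b1(1) b2(1) b3(1)])
         (auto simp: UX UY elim!: AE_mp intro!: AE_I2)
    then show "((\<lambda>(xi, xk, yj). condP M (\<lambda>\<omega>. \<bar>Theta i \<omega> * X i \<omega>\<bar> > xi)
           (\<lambda>\<omega>. Theta k \<omega> * X k \<omega> > xk \<and> Delta j \<omega> * Y j \<omega> > yj)) \<longlongrightarrow> 0)
           (at_top \<times>\<^sub>F at_top \<times>\<^sub>F at_top)" using ikj by (simp add: UX UY)
  next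
    fix j k i assume jki: "j < m" "k < m" "i < n" "j \<noteq> k"
    obtain b1 where b1: "b1 > 0" "AE \<omega> in M. 0 \<le> Delta j \<omega> \<and> Delta j \<omega> \<le> b1" using bD jki by blast
    obtain b2 where b2: "b2 > 0" "AE \<omega> in M. 0 \<le> Theta i \<omega> \<and> Theta i \<omega> \<le> b2" using bT jki by blast
    obtain b3 where b3: "b3 > 0" "AE \<omega> in M. 0 \<le> Delta k \<omega> \<and> Delta k \<omega> \<le> b3" using bD jki by blast
    have "((\<lambda>(a, b, c). condP M (\<lambda>\<omega>. \<bar>snd (U \<omega>) j * snd (V \<omega>) j\<bar> > a)
            (\<lambda>\<omega>. fst (U \<omega>) i * fst (V \<omega>) i > b \<and> snd (U \<omega>) k * snd (V \<omega>) k > c))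
          \<longlongrightarrow> 0) (at_top \<times>\<^sub>F at_top \<times>\<^sub>F at_top)"
      using G jki b1 b2 b3 swap_lim[of "\<lambda>(xi, yj, yk). condP M (\<lambda>\<omega>. yj < \<bar>Y j \<omega>\<bar>) (\<lambda>\<omega>. xi < X i \<omega> \<and> yk < Y k \<omega>)" 0]
      by (intro key[OF assms(1) ind ms[OF jki(1)] mf[OF jki(3)] ms[OF jki(2)]
            ms[OF jki(1)] mf[OF jki(3)] ms[OF jki(2)] b1(1) b2(1) b3(1)])
         (auto simp: UX UY elim!: AE_mp intro!: AE_I2)
    then show "((\<lambda>(xi, yj, yk). condP M (\<lambda>\<omega>. \<bar>Delta j \<omega> * Y j \<omega>\<bar> > yj)
           (\<lambda>\<omega>. Theta i \<omega> * X i \<omega> > xi \<and> Delta k \<omega> * Y k \<omega> > yk)) \<longlongrightarrow> 0)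
           (at_top \<times>\<^sub>F at_top \<times>\<^sub>F at_top)" using jki swap_lim by (fastforce simp: UX UY)
  qed
qed

end
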